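(* Let $m\ge2$, $N=2m$, and let $G$ be the "dense center" graph: vertices $c_1,\dots,c_m$ forming a complete graph, together with leaves $\ell_1,\dots,\ell_m$, where $\ell_j$ is adjacent only to $c_j$. Then $n_{\max}(G)=m$, the roots are $c_1,\dots,c_m$, and $\beta_C^G=\tfrac32N-1$. Let $\mathcal L\subseteq\{\ell_1,\dots,\ell_m\}$ with $|\mathcal L|<m$, let $j$ be such that $\ell_j\notin\mathcal L$, and $G'=G[V\setminus\mathcal L]$. Then $$\langle I_{c_j}^{G*}\rangle_\rho=\langle I_{c_j}^{G'*}\rangle_\rho=(2\sqrt2-1)m+N-1-(\sqrt2+1)|\mathcal L| .$$ Consequently $\langle I_{c_j}^{G'*}\rangle_\rho>\beta_C^{G'}$ if and only if $|\mathcal L|<\frac{\sqrt2-1}{\sqrt2}N$, and $\langle I_{c_j}^{G*}\rangle_\rho>\beta_C^{G}$ if and only if $|\mathcal L|<\frac{\sqrt2-1}{\sqrt2+1}N$.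
   Context: Qubits are labelled $1,\dots,N$; $X_i,Z_i$ denote the Pauli $X$ and $Z$ operators on qubit $i$. For a graph $H$ with vertex set $V(H)\subseteq\{1,\dots,N\}$, $\mathcal N_i^H$ is the neighbour set of $i$, $\overline{\mathcal N_i^H}=\mathcal N_i^H\cup\{i\}$, $n_{\max}(H)$ the maximum degree; a root is a vertex of degree $n_{\max}(H)$. $S_i^H=X_i\prod_{j\in\mathcal N_i^H}Z_j$. The graph state $|\phi^G\rangle$ is the unique state with $S_i^G|\phi^G\rangle=|\phi^G\rangle$ for all $i$. For a vertex $r$ of $H$, $I_r^{H*}=\sqrt2\,n_{\max}(H)S_r^H+\sqrt2\sum_{i\in\mathcal N_r^H}S_i^H+\sum_{i\in V(H)\setminus\overline{\mathcal N_r^H}}S_i^H$, and $\beta_C^H=n_{\max}(H)+|V(H)|-1$. For lost set $\mathcal L$, $G'=G[V\setminus\mathcal L]$ (labels kept, identity on $\mathcal L$) and $\rho=\mathrm{Tr}_{\mathcal L}(|\phi^G\rangle\langle\phi^G|)\otimes\bigotimes_{l\in\mathcal L}|0\rangle\langle0|_l$; $\langle A\rangle_\rho=\mathrm{Tr}(A\rho)$. *)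

theory Defs
  imports Complex_Main "Jordan_Normal_Form.Matrix"
begin

(* Graphs: a pair (V, E) with V a finite set of qubit labels and E a symmetric
   irreflexive edge relation on V. *)
type_synonym graph = "nat set \<times> (nat \<times> nat) set"

definition verts :: "graph \<Rightarrow> nat set" where "verts H = fst H"
definition edges :: "graph \<Rightarrow> (nat \<times> nat) set" where "edges H = snd H"

definition nbrs :: "graph \<Rightarrow> nat \<Rightarrow> nat set" where
  "nbrs H i = {j. (i, j) \<in> edges H}"

definition cnbrs :: "graph \<Rightarrow> nat \<Rightarrow> nat set" where
  "cnbrs H i = insert i (nbrs H i)"

definition deg :: "graph \<Rightarrow> nat \<Rightarrow> nat" where
  "deg H i = card (nbrs H i)"

definition nmax :: "graph \<Rightarrow> nat" where
  "nmax H = Max (deg H ` verts H)"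

definition roots :: "graph \<Rightarrow> nat set" where
  "roots H = {v \<in> verts H. deg H v = nmax H}"

(* induced subgraph G[V \ L] (labels kept) *)
definition induced_del :: "graph \<Rightarrow> nat set \<Rightarrow> graph" where
  "induced_del H L = (verts H - L, {(a, b) \<in> edges H. a \<notin> L \<and> b \<notin> L})"

definition betaC :: "graph \<Rightarrow> real" where
  "betaC H = real (nmax H) + real (card (verts H)) - 1"

(* N-qubit Hilbert space C^(2^N); computational basis index x < 2^N,
   qubit i (1 \<le> i \<le> N) corresponds to bit (i-1) of x. *)
definition qbit :: "nat \<Rightarrow> nat \<Rightarrow> nat" where
  "qbit x i = x div 2 ^ (i - 1) mod 2"

definition flip :: "nat \<Rightarrow> nat \<Rightarrow> nat" where
  "flip x i = (if qbit x i = 0 then x + 2 ^ (i - 1) else x - 2 ^ (i - 1))"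

definition Xop :: "nat \<Rightarrow> nat \<Rightarrow> complex mat" where
  "Xop N i = mat (2 ^ N) (2 ^ N) (\<lambda>(r, c). if r = flip c i then 1 else 0)"

definition Zop :: "nat \<Rightarrow> nat \<Rightarrow> complex mat" where
  "Zop N i = mat (2 ^ N) (2 ^ N)
     (\<lambda>(r, c). if r = c then (if qbit c i = 0 then 1 else -1) else 0)"

definition mprod :: "nat \<Rightarrow> complex mat list \<Rightarrow> complex mat" where
  "mprod N As = foldr (*) As (1\<^sub>m (2 ^ N))"

definition msum :: "nat \<Rightarrow> complex mat list \<Rightarrow> complex mat" where
  "msum N As = foldr (+) As (0\<^sub>m (2 ^ N) (2 ^ N))"

definition Sop :: "nat \<Rightarrow> graph \<Rightarrow> nat \<Rightarrow> complex mat" where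
  "Sop N H i = Xop N i * mprod N (map (Zop N) (sorted_list_of_set (nbrs H i)))"

definition Iop :: "nat \<Rightarrow> graph \<Rightarrow> nat \<Rightarrow> complex mat" where
  "Iop N H r =
     (complex_of_real (sqrt 2 * real (nmax H))) \<cdot>\<^sub>m Sop N H r
   + (complex_of_real (sqrt 2)) \<cdot>\<^sub>m msum N (map (Sop N H) (sorted_list_of_set (nbrs H r)))
   + msum N (map (Sop N H) (sorted_list_of_set (verts H - cnbrs H r)))"

definition outer :: "complex vec \<Rightarrow> complex mat" where
  "outer v = mat (dim_vec v) (dim_vec v) (\<lambda>(a, b). v $ a * cnj (v $ b))"

(* density matrix |phi^G><phi^G| of the graph state: the (unique) projector onto a
   unit vector stabilised by all S_i^G *)
definition graph_state_dm :: "nat \<Rightarrow> graph \<Rightarrow> complex mat" where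
  "graph_state_dm N H = (THE \<rho>. \<exists>v \<in> carrier_vec (2 ^ N).
      (\<Sum>a<2 ^ N. (cmod (v $ a))\<^sup>2) = 1 \<and>
      (\<forall>i \<in> verts H. Sop N H i *\<^sub>v v = v) \<and> \<rho> = outer v)"

(* Tr_L(rho) \<otimes> |0><0|_L, qubit labels kept *)
definition lost_state :: "nat \<Rightarrow> nat set \<Rightarrow> complex mat \<Rightarrow> complex mat" where
  "lost_state N L \<rho> = mat (2 ^ N) (2 ^ N) (\<lambda>(x, y).
     if (\<forall>l \<in> L. qbit x l = 0 \<and> qbit y l = 0)
     then (\<Sum>z \<in> {z. z < 2 ^ N \<and> (\<forall>i \<in> {1..N} - L. qbit z i = 0)}. \<rho> $$ (x + z, y + z))
     else 0)"

definition mtrace :: "complex mat \<Rightarrow> complex" where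
  "mtrace A = (\<Sum>a<dim_row A. A $$ (a, a))"

definition expect :: "complex mat \<Rightarrow> complex mat \<Rightarrow> complex" where
  "expect A \<rho> = mtrace (A * \<rho>)"

(* dense center graph: centers c_j = j, leaves l_j = m + j (j = 1..m) *)
definition dense_center :: "nat \<Rightarrow> graph" where
  "dense_center m = ({1..2 * m},
     {(a, b). a \<in> {1..m} \<and> b \<in> {1..m} \<and> a \<noteq> b}
     \<union> {(j, m + j) | j. j \<in> {1..m}} \<union> {(m + j, j) | j. j \<in> {1..m}})"

end

theory Submission
  imports Defs
begin


lemma qbit_bit: "qbit x i = (if bit x (i - 1) then 1 else 0)"
  unfolding qbit_def by (simp add: bit_iff_odd odd_iff_mod_2_eq_one)

lemma qbit0_iff: "qbit x i = 0 \<longleftrightarrow> \<not> bit x (i - 1)"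
  by (simp add: qbit_bit)

lemma unset_nat: "bit (a::nat) n \<Longrightarrow> a - 2 ^ n = unset_bit n a"
proof -
  assume h: "bit a n"
  have "set_bit n (unset_bit n a) = unset_bit n a + 2 ^ n"
    by (simp add: set_bit_eq bit_unset_bit_iff)
  moreover have "set_bit n (unset_bit n a) = a"
    by (rule bit_eqI) (auto simp: bit_set_bit_iff bit_unset_bit_iff h)
  ultimately show ?thesis by simp
qed

lemma flip_eq: "flip x i = flip_bit (i - 1) x"
  unfolding flip_def flip_bit_eq_if qbit0_iff by (simp add: set_bit_eq unset_nat)

lemma bit_flip: "bit (flip x i) n \<longleftrightarrow> (if n = i - 1 then \<not> bit x n else bit x n)"
  by (auto simp: flip_eq bit_flip_bit_iff)

lemma flip_flip[simp]: "flip (flip x i) i = x"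
  by (rule bit_eqI) (auto simp: bit_flip)

lemma lt_pow_iff: "(x::nat) < 2 ^ N \<longleftrightarrow> (\<forall>n. bit x n \<longrightarrow> n < N)"
proof
  assume "x < 2 ^ N"
  hence "take_bit N x = x" by (simp add: take_bit_nat_eq_self_iff)
  thus "\<forall>n. bit x n \<longrightarrow> n < N" by (metis bit_take_bit_iff)
next
  assume "\<forall>n. bit x n \<longrightarrow> n < N"
  hence "take_bit N x = x" by (intro bit_eqI) (auto simp: bit_take_bit_iff)
  thus "x < 2 ^ N" by (metis take_bit_nat_less_exp)
qed

lemma flip_lt: "x < 2 ^ N \<Longrightarrow> 1 \<le> i \<Longrightarrow> i \<le> N \<Longrightarrow> flip x i < 2 ^ N"
  unfolding lt_pow_iff by (auto simp: bit_flip split: if_splits)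

lemma qbit_flip: "1 \<le> i \<Longrightarrow> 1 \<le> j \<Longrightarrow> qbit (flip x i) j = (if j = i then 1 - qbit x i else qbit x j)"
  by (auto simp: qbit_bit bit_flip)

lemma qbit_le1: "qbit x i \<le> 1" unfolding qbit_def by simp



definition Dg :: "nat \<Rightarrow> (nat \<Rightarrow> complex) \<Rightarrow> complex mat" where
  "Dg N f = mat (2 ^ N) (2 ^ N) (\<lambda>(r, c). if r = c then f c else 0)"

definition zs1 :: "nat \<Rightarrow> nat \<Rightarrow> complex" where
  "zs1 j c = (if qbit c j = 0 then 1 else -1)"

definition zsg :: "nat set \<Rightarrow> nat \<Rightarrow> complex" where
  "zsg M c = (\<Prod>j\<in>M. zs1 j c)"

lemma Dg_carrier[simp]: "Dg N f \<in> carrier_mat (2^N) (2^N)" by (simp add: Dg_def)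

lemma Dg_mult: "Dg N f * Dg N g = Dg N (\<lambda>c. f c * g c)"
proof (rule eq_matI)
  fix i j assume ij: "i < dim_row (Dg N (\<lambda>c. f c * g c))" "j < dim_col (Dg N (\<lambda>c. f c * g c))"
  hence ij': "i < 2^N" "j < 2^N" by (auto simp: Dg_def)
  have "(Dg N f * Dg N g) $$ (i, j) = (\<Sum>k<2^N. Dg N f $$ (i,k) * Dg N g $$ (k,j))"
    using ij' by (simp add: Dg_def scalar_prod_def atLeast0LessThan)
  also have "\<dots> = (\<Sum>k<2^N. if k = i then Dg N f $$ (i,i) * Dg N g $$ (i,j) else 0)"
    by (rule sum.cong) (auto simp: Dg_def ij')
  also have "\<dots> = Dg N (\<lambda>c. f c * g c) $$ (i,j)" using ij' by (simp add: Dg_def)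
  finally show "(Dg N f * Dg N g) $$ (i, j) = Dg N (\<lambda>c. f c * g c) $$ (i,j)" .
qed (auto simp: Dg_def)

lemma Zop_Dg: "Zop N j = Dg N (zs1 j)"
  unfolding Zop_def Dg_def zs1_def by (rule cong_mat) auto

lemma one_Dg: "1\<^sub>m (2^N) = Dg N (\<lambda>_. 1)"
  unfolding Dg_def by (rule eq_matI) auto

lemma mprod_Z: "mprod N (map (Zop N) xs) = Dg N (\<lambda>c. prod_list (map (\<lambda>j. zs1 j c) xs))"
  by (induction xs) (simp_all add: mprod_def one_Dg Zop_Dg Dg_mult)

lemma zsg_list: "finite M \<Longrightarrow> prod_list (map (\<lambda>j. zs1 j c) (sorted_list_of_set M)) = zsg M c"
  unfolding zsg_def by (metis distinct_sorted_list_of_set prod.distinct_set_conv_list set_sorted_list_of_set)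

lemma Xop_carrier[simp]: "Xop N i \<in> carrier_mat (2^N) (2^N)" by (simp add: Xop_def)

lemma Sop_Dg: "finite (nbrs H i) \<Longrightarrow> Sop N H i = Xop N i * Dg N (zsg (nbrs H i))"
  unfolding Sop_def mprod_Z by (simp add: zsg_list)

lemma Sop_carrier[simp]: "Sop N H i \<in> carrier_mat (2^N) (2^N)"
  unfolding Sop_def mprod_Z by (rule mult_carrier_mat[OF Xop_carrier Dg_carrier])

lemma Xop_Dg_entry: "r < 2^N \<Longrightarrow> c < 2^N \<Longrightarrow>
  (Xop N i * Dg N f) $$ (r, c) = (if r = flip c i then f c else 0)"
proof -
  assume rc: "r < 2^N" "c < 2^N"
  have "(Xop N i * Dg N f) $$ (r, c) = (\<Sum>k<2^N. Xop N i $$ (r,k) * Dg N f $$ (k,c))"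
    using rc by (simp add: Dg_def Xop_def scalar_prod_def atLeast0LessThan)
  also have "\<dots> = (\<Sum>k<2^N. if k = c then Xop N i $$ (r,c) * f c else 0)"
    by (rule sum.cong) (auto simp: Dg_def rc)
  also have "\<dots> = (if r = flip c i then f c else 0)" using rc by (simp add: Xop_def)
  finally show ?thesis .
qed

lemma Sop_entry: "finite (nbrs H i) \<Longrightarrow> r < 2^N \<Longrightarrow> c < 2^N \<Longrightarrow>
  Sop N H i $$ (r, c) = (if r = flip c i then zsg (nbrs H i) c else 0)"
  by (simp add: Sop_Dg Xop_Dg_entry)



lemma expect_formula: "A \<in> carrier_mat n n \<Longrightarrow> R \<in> carrier_mat n n \<Longrightarrow>
  expect A R = (\<Sum>a<n. \<Sum>c<n. A $$ (a,c) * R $$ (c,a))"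
  unfolding expect_def mtrace_def
  by (auto simp: scalar_prod_def atLeast0LessThan intro!: sum.cong)

lemma expect_add: "A \<in> carrier_mat n n \<Longrightarrow> B \<in> carrier_mat n n \<Longrightarrow> R \<in> carrier_mat n n \<Longrightarrow>
  expect (A + B) R = expect A R + expect B R"
proof -
  assume h: "A \<in> carrier_mat n n" "B \<in> carrier_mat n n" "R \<in> carrier_mat n n"
  hence c: "A + B \<in> carrier_mat n n" by simp
  have "expect (A + B) R = (\<Sum>a<n. \<Sum>c<n. (A + B) $$ (a,c) * R $$ (c,a))"
    by (rule expect_formula[OF c h(3)])
  also have "\<dots> = (\<Sum>a<n. \<Sum>c<n. A $$ (a,c) * R $$ (c,a) + B $$ (a,c) * R $$ (c,a))"
    using h by (intro sum.cong refl) (auto simp: distrib_right)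
  finally show ?thesis using h by (simp add: expect_formula sum.distrib)
qed

lemma expect_smult: "A \<in> carrier_mat n n \<Longrightarrow> R \<in> carrier_mat n n \<Longrightarrow>
  expect (k \<cdot>\<^sub>m A) R = k * expect A R"
proof -
  assume h: "A \<in> carrier_mat n n" "R \<in> carrier_mat n n"
  hence c: "k \<cdot>\<^sub>m A \<in> carrier_mat n n" by simp
  have "expect (k \<cdot>\<^sub>m A) R = (\<Sum>a<n. \<Sum>c<n. (k \<cdot>\<^sub>m A) $$ (a,c) * R $$ (c,a))"
    by (rule expect_formula[OF c h(2)])
  also have "\<dots> = (\<Sum>a<n. \<Sum>c<n. k * (A $$ (a,c) * R $$ (c,a)))"
    using h by (intro sum.cong refl) (auto simp: mult.assoc)
  finally show ?thesis using h by (simp add: expect_formula sum_distrib_left)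
qed

lemma msum_carrier: "(\<forall>A\<in>set As. A \<in> carrier_mat (2^N) (2^N)) \<Longrightarrow> msum N As \<in> carrier_mat (2^N) (2^N)"
  by (induction As) (auto simp: msum_def)

lemma expect_msum: "(\<forall>A\<in>set As. A \<in> carrier_mat (2^N) (2^N)) \<Longrightarrow> R \<in> carrier_mat (2^N) (2^N) \<Longrightarrow>
   expect (msum N As) R = sum_list (map (\<lambda>A. expect A R) As)"
proof (induction As)
  case Nil
  have "expect (0\<^sub>m (2^N) (2^N)) R = (\<Sum>a<2^N. \<Sum>c<2^N. (0\<^sub>m (2^N) (2^N)) $$ (a,c) * R $$ (c,a))"
    using Nil by (intro expect_formula) auto
  also have "\<dots> = 0" by (intro sum.neutral ballI) auto
  finally show ?case by (simp add: msum_def)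
next
  case (Cons A As)
  have "msum N (A # As) = A + msum N As" by (simp add: msum_def)
  moreover have "expect (A + msum N As) R = expect A R + expect (msum N As) R"
    using Cons msum_carrier[of As N] by (intro expect_add) auto
  ultimately show ?case using Cons by simp
qed

lemma expect_msum_set: "finite S \<Longrightarrow> R \<in> carrier_mat (2^N) (2^N) \<Longrightarrow>
   expect (msum N (map (Sop N H) (sorted_list_of_set S))) R = (\<Sum>i\<in>S. expect (Sop N H i) R)"
  by (subst expect_msum) (auto simp: sum_list_distinct_conv_sum_set)

lemma zsg_flip: "i \<notin> M \<Longrightarrow> 1 \<le> i \<Longrightarrow> 0 \<notin> M \<Longrightarrow> zsg M (flip c i) = zsg M c"
  unfolding zsg_def zs1_def
proof (rule prod.cong[OF refl])
  fix j assume "j \<in> M" "i \<notin> M" "1 \<le> i" "0 \<notin> M"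
  hence "1 \<le> j" "j \<noteq> i" by (cases j; auto)+
  thus "(if qbit (flip c i) j = 0 then 1 else - 1) = (if qbit c j = 0 then (1::complex) else - 1)"
    using \<open>1 \<le> i\<close> by (simp add: qbit_flip)
qed

lemma expect_Sop: "finite (nbrs H i) \<Longrightarrow> i \<notin> nbrs H i \<Longrightarrow> 0 \<notin> nbrs H i \<Longrightarrow> 1 \<le> i \<Longrightarrow> i \<le> N \<Longrightarrow>
  R \<in> carrier_mat (2^N) (2^N) \<Longrightarrow>
  expect (Sop N H i) R = (\<Sum>a<2^N. zsg (nbrs H i) a * R $$ (flip a i, a))"
proof -
  assume h: "finite (nbrs H i)" "i \<notin> nbrs H i" "0 \<notin> nbrs H i" "1 \<le> i" "i \<le> N"
    "R \<in> carrier_mat (2^N) (2^N)"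
  have "expect (Sop N H i) R = (\<Sum>a<2^N. \<Sum>c<2^N. Sop N H i $$ (a,c) * R $$ (c,a))"
    using h by (simp add: expect_formula)
  also have "\<dots> = (\<Sum>a<2^N. \<Sum>c<2^N. if c = flip a i then zsg (nbrs H i) a * R $$ (flip a i, a) else 0)"
  proof (rule sum.cong[OF refl], rule sum.cong[OF refl])
    fix a c :: nat assume ac: "a \<in> {..<2^N}" "c \<in> {..<2^N}"
    have "a = flip c i \<longleftrightarrow> c = flip a i" by auto
    then show "Sop N H i $$ (a,c) * R $$ (c,a) = (if c = flip a i then zsg (nbrs H i) a * R $$ (flip a i, a) else 0)"
      using ac h by (auto simp: Sop_entry zsg_flip)
  qed
  also have "\<dots> = (\<Sum>a<2^N. zsg (nbrs H i) a * R $$ (flip a i, a))"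
    using h by (auto intro!: sum.cong simp: flip_lt)
  finally show ?thesis .
qed



definition AL :: "nat \<Rightarrow> nat set \<Rightarrow> nat set" where
  "AL N L = {a. a < 2^N \<and> (\<forall>l\<in>L. qbit a l = 0)}"
definition ZL :: "nat \<Rightarrow> nat set \<Rightarrow> nat set" where
  "ZL N L = {z. z < 2 ^ N \<and> (\<forall>i \<in> {1..N} - L. qbit z i = 0)}"

lemma AL_bit: "a \<in> AL N L \<Longrightarrow> bit a n \<Longrightarrow> n < N \<and> Suc n \<notin> L"
proof -
  assume a: "a \<in> AL N L" and b: "bit a n"
  have "qbit a (Suc n) \<noteq> 0" using b by (simp add: qbit0_iff)
  thus ?thesis using a b unfolding AL_def lt_pow_iff by auto
qed

lemma ZL_bit: "z \<in> ZL N L \<Longrightarrow> bit z n \<Longrightarrow> n < N \<and> Suc n \<in> L"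
proof -
  assume z: "z \<in> ZL N L" and b: "bit z n"
  hence "n < N" unfolding ZL_def lt_pow_iff by auto
  moreover have "Suc n \<in> {1..N}" using \<open>n < N\<close> by auto
  moreover have "qbit z (Suc n) \<noteq> 0" using b by (simp add: qbit0_iff)
  moreover have zz: "\<forall>i\<in>{1..N}-L. qbit z i = 0" using z unfolding ZL_def by auto
  have "Suc n \<in> L"
  proof (rule ccontr)
    assume "Suc n \<notin> L"
    hence "Suc n \<in> {1..N}-L" using \<open>Suc n \<in> {1..N}\<close> by simp
    hence "qbit z (Suc n) = 0" using zz by simp
    thus False using \<open>qbit z (Suc n) \<noteq> 0\<close> by simp
  qed
  thus ?thesis using \<open>n < N\<close> by auto
qed

lemma AZ_add_bit: "a \<in> AL N L \<Longrightarrow> z \<in> ZL N L \<Longrightarrow> bit (a + z) n \<longleftrightarrow> bit a n \<or> bit z n"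
proof -
  assume a: "a \<in> AL N L" and z: "z \<in> ZL N L"
  have "a + z = Bit_Operations.or a z" by (rule disjunctive_add) (use AL_bit[OF a] ZL_bit[OF z] in blast)
  thus ?thesis by (simp add: bit_or_iff)
qed

lemma AZ_add_lt: "a \<in> AL N L \<Longrightarrow> z \<in> ZL N L \<Longrightarrow> a + z < 2^N"
  unfolding lt_pow_iff using AZ_add_bit AL_bit ZL_bit by blast

definition bitsel :: "nat \<Rightarrow> nat \<Rightarrow> (nat \<Rightarrow> bool) \<Rightarrow> nat" where
  "bitsel N w P = horner_sum of_bool 2 (map (\<lambda>n. bit w n \<and> P n) [0..<N])"

lemma bit_bitsel: "bit (bitsel N w P) n \<longleftrightarrow> n < N \<and> bit w n \<and> P n"
  unfolding bitsel_def by (auto simp: bit_horner_sum_bit_iff)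

lemma decomp_bij: "L \<subseteq> {1..N} \<Longrightarrow> bij_betw (\<lambda>(a,z). a + z) (AL N L \<times> ZL N L) {..<2^N}"
proof -
  assume L: "L \<subseteq> {1..N}"
  show ?thesis
  proof (rule bij_betw_imageI)
    show "inj_on (\<lambda>(a,z). a + z) (AL N L \<times> ZL N L)"
    proof (rule inj_onI, clarify)
      fix a z a' z' assume h: "a \<in> AL N L" "z \<in> ZL N L" "a' \<in> AL N L" "z' \<in> ZL N L" "a + z = a' + z'"
      have ba: "bit a n \<longleftrightarrow> bit (a+z) n \<and> Suc n \<notin> L" for n
        using AZ_add_bit[OF h(1,2)] AL_bit[OF h(1)] ZL_bit[OF h(2)] by blast
      have ba': "bit a' n \<longleftrightarrow> bit (a'+z') n \<and> Suc n \<notin> L" for n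
        using AZ_add_bit[OF h(3,4)] AL_bit[OF h(3)] ZL_bit[OF h(4)] by blast
      have bz: "bit z n \<longleftrightarrow> bit (a+z) n \<and> Suc n \<in> L" for n
        using AZ_add_bit[OF h(1,2)] AL_bit[OF h(1)] ZL_bit[OF h(2)] by blast
      have bz': "bit z' n \<longleftrightarrow> bit (a'+z') n \<and> Suc n \<in> L" for n
        using AZ_add_bit[OF h(3,4)] AL_bit[OF h(3)] ZL_bit[OF h(4)] by blast
      show "a = a' \<and> z = z'"
        by (intro conjI; rule bit_eqI) (simp_all add: ba ba' bz bz' h(5))
    qed
  next
    show "(\<lambda>(a,z). a + z) ` (AL N L \<times> ZL N L) = {..<2^N}"
    proof
      show "(\<lambda>(a,z). a + z) ` (AL N L \<times> ZL N L) \<subseteq> {..<2^N}" using AZ_add_lt by auto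
    next
      show "{..<2^N} \<subseteq> (\<lambda>(a,z). a + z) ` (AL N L \<times> ZL N L)"
      proof
        fix w :: nat assume "w \<in> {..<2^N}"
        hence w: "bit w n \<Longrightarrow> n < N" for n using lt_pow_iff by auto
        define a where "a = bitsel N w (\<lambda>n. Suc n \<notin> L)"
        define z where "z = bitsel N w (\<lambda>n. Suc n \<in> L)"
        have ab: "\<not> bit a (l - 1)" if "l \<in> L" for l
        proof
          assume "bit a (l - 1)"
          hence "Suc (l - 1) \<notin> L" unfolding a_def bit_bitsel by simp
          moreover have "Suc (l - 1) = l" using that L by auto
          ultimately show False using that by simp
        qed
        have a: "a \<in> AL N L" unfolding AL_def
          using ab by (auto simp: lt_pow_iff qbit0_iff a_def bit_bitsel)
        have zb: "\<not> bit z (l - 1)" if "l \<in> {1..N} - L" for l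
        proof
          assume "bit z (l - 1)"
          hence "Suc (l - 1) \<in> L" unfolding z_def bit_bitsel by simp
          moreover have "Suc (l - 1) = l" using that by auto
          ultimately show False using that by simp
        qed
        have z: "z \<in> ZL N L" unfolding ZL_def
          using zb by (auto simp: lt_pow_iff qbit0_iff z_def bit_bitsel)
        have "bit (a + z) n \<longleftrightarrow> bit w n" for n
          unfolding AZ_add_bit[OF a z] by (auto simp: a_def z_def bit_bitsel w)
        hence "w = a + z" by (intro bit_eqI) auto
        thus "w \<in> (\<lambda>(a,z). a + z) ` (AL N L \<times> ZL N L)" using a z by auto
      qed
    qed
  qed
qed

lemma decomp_sum: "L \<subseteq> {1..N} \<Longrightarrow>
  (\<Sum>a\<in>AL N L. \<Sum>z\<in>ZL N L. f (a + z)) = (\<Sum>w<2^N. f w)"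
proof -
  assume L: "L \<subseteq> {1..N}"
  have fin: "finite (AL N L)" "finite (ZL N L)" unfolding AL_def ZL_def by auto
  have "(\<Sum>a\<in>AL N L. \<Sum>z\<in>ZL N L. f (a + z)) = (\<Sum>(a,z)\<in>AL N L \<times> ZL N L. f (a + z))"
    by (rule sum.cartesian_product)
  also have "\<dots> = (\<Sum>w<2^N. f w)"
    using sum.reindex_bij_betw[OF decomp_bij[OF L], of f]
    by (simp add: case_prod_unfold)
  finally show ?thesis .
qed



lemma lost_carrier[simp]: "lost_state N L D \<in> carrier_mat (2^N) (2^N)"
  by (simp add: lost_state_def)

lemma lost_entry: "x < 2^N \<Longrightarrow> y < 2^N \<Longrightarrow> lost_state N L D $$ (x,y) =
  (if (\<forall>l\<in>L. qbit x l = 0 \<and> qbit y l = 0) then \<Sum>z\<in>ZL N L. D $$ (x+z, y+z) else 0)"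
  by (simp add: lost_state_def ZL_def)

lemma flip_AL: "a \<in> AL N L \<Longrightarrow> 1 \<le> i \<Longrightarrow> i \<le> N \<Longrightarrow> i \<notin> L \<Longrightarrow> L \<subseteq> {1..N} \<Longrightarrow> flip a i \<in> AL N L"
proof -
  assume h: "a \<in> AL N L" "1 \<le> i" "i \<le> N" "i \<notin> L" "L \<subseteq> {1..N}"
  have "qbit (flip a i) l = 0" if "l \<in> L" for l
  proof -
    have "1 \<le> l" "l \<noteq> i" using that h by auto
    hence "qbit (flip a i) l = qbit a l" using h by (simp add: qbit_flip)
    thus ?thesis using h that unfolding AL_def by auto
  qed
  moreover have "flip a i < 2^N" using h flip_lt unfolding AL_def by auto
  ultimately show ?thesis unfolding AL_def by auto
qed

lemma flip_add: "a \<in> AL N L \<Longrightarrow> z \<in> ZL N L \<Longrightarrow> 1 \<le> i \<Longrightarrow> i \<le> N \<Longrightarrow> i \<notin> L \<Longrightarrow> L \<subseteq> {1..N} \<Longrightarrow>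
  flip a i + z = flip (a + z) i"
proof -
  assume h: "a \<in> AL N L" "z \<in> ZL N L" "1 \<le> i" "i \<le> N" "i \<notin> L" "L \<subseteq> {1..N}"
  have fa: "flip a i \<in> AL N L" using flip_AL h by blast
  have zi: "\<not> bit z (i - Suc 0)"
  proof
    assume "bit z (i - Suc 0)"
    hence "Suc (i - Suc 0) \<in> L" using ZL_bit[OF h(2)] by blast
    thus False using h(3,5) by simp
  qed
  show ?thesis
    by (rule bit_eqI) (use zi in \<open>auto simp: AZ_add_bit[OF fa h(2)] AZ_add_bit[OF h(1,2)] bit_flip\<close>)
qed

lemma zsg_add: "a \<in> AL N L \<Longrightarrow> z \<in> ZL N L \<Longrightarrow> M \<subseteq> {1..N} \<Longrightarrow> finite M \<Longrightarrow>
  zsg M a = zsg (M - L) (a + z)"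
proof -
  assume h: "a \<in> AL N L" "z \<in> ZL N L" "M \<subseteq> {1..N}" "finite M"
  have "zsg M a = zsg (M - L) a"
    unfolding zsg_def
    by (rule prod.mono_neutral_right) (use h in \<open>auto simp: AL_def zs1_def\<close>)
  also have "\<dots> = zsg (M - L) (a + z)"
    unfolding zsg_def
  proof (rule prod.cong[OF refl])
    fix j assume j: "j \<in> M - L"
    have "\<not> bit z (j - 1)"
    proof
      assume "bit z (j - 1)"
      hence "Suc (j - 1) \<in> L" using ZL_bit[OF h(2)] by blast
      moreover have "Suc (j - 1) = j" using j h(3) by auto
      ultimately show False using j by simp
    qed
    thus "zs1 j a = zs1 j (a + z)"
      by (simp add: zs1_def qbit0_iff AZ_add_bit[OF h(1,2)])
  qed
  finally show ?thesis .
qed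

lemma lost_eval:
  assumes L: "L \<subseteq> {1..N}" and i: "1 \<le> i" "i \<le> N" "i \<notin> L"
    and M: "finite M" "M \<subseteq> {1..N}"
  shows "(\<Sum>a<2^N. zsg M a * lost_state N L D $$ (flip a i, a))
       = (\<Sum>w<2^N. zsg (M - L) w * D $$ (flip w i, w))"
proof -
  have "(\<Sum>a<2^N. zsg M a * lost_state N L D $$ (flip a i, a))
      = (\<Sum>a<2^N. if a \<in> AL N L then zsg M a * (\<Sum>z\<in>ZL N L. D $$ (flip a i + z, a + z)) else 0)"
  proof (rule sum.cong[OF refl])
    fix a :: nat assume a: "a \<in> {..<2^N}"
    have eq: "(\<forall>l\<in>L. qbit (flip a i) l = 0 \<and> qbit a l = 0) \<longleftrightarrow> a \<in> AL N L"
    proof -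
      have "qbit (flip a i) l = qbit a l" if "l \<in> L" for l
        using that L i by (subst qbit_flip) auto
      thus ?thesis using a unfolding AL_def by auto
    qed
    show "zsg M a * lost_state N L D $$ (flip a i, a) =
      (if a \<in> AL N L then zsg M a * (\<Sum>z\<in>ZL N L. D $$ (flip a i + z, a + z)) else 0)"
      using a i by (simp add: lost_entry flip_lt eq)
  qed
  also have "\<dots> = (\<Sum>a\<in>AL N L. zsg M a * (\<Sum>z\<in>ZL N L. D $$ (flip a i + z, a + z)))"
    by (subst sum.inter_restrict[symmetric]) (auto simp: AL_def intro!: sum.cong)
  also have "\<dots> = (\<Sum>a\<in>AL N L. \<Sum>z\<in>ZL N L. zsg (M - L) (a + z) * D $$ (flip (a + z) i, a + z))"
    unfolding sum_distrib_left
    by (intro sum.cong refl) (simp add: flip_add[OF _ _ i L] zsg_add[OF _ _ M(2,1)])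
  also have "\<dots> = (\<Sum>w<2^N. zsg (M - L) w * D $$ (flip w i, w))"
    by (rule decomp_sum[OF L])
  finally show ?thesis .
qed



lemma zs1_sq: "zs1 j w * zs1 j w = 1" by (simp add: zs1_def)

lemma zsg_sq: "zsg K w * zsg K w = 1"
  unfolding zsg_def prod.distrib[symmetric] zs1_sq by simp

lemma zs1_norm: "cmod (zs1 j w) = 1" by (simp add: zs1_def)

lemma zsg_norm: "cmod (zsg K w) = 1"
  unfolding zsg_def prod_norm[symmetric] zs1_norm by simp

lemma zsg_real: "cnj (zsg K w) = zsg K w"
  unfolding zsg_def zs1_def by (auto intro!: prod.cong)

lemma zsg_diff_mult: "finite M \<Longrightarrow> zsg (M - L) w * zsg M w = zsg (M \<inter> L) w"
proof -
  assume f: "finite M"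
  have "M = (M - L) \<union> (M \<inter> L)" by auto
  hence "zsg M w = zsg (M - L) w * zsg (M \<inter> L) w"
    unfolding zsg_def using f by (subst prod.union_disjoint[symmetric]) (auto intro: arg_cong[where f="\<lambda>S. prod _ S"])
  hence "zsg (M - L) w * zsg M w = (zsg (M - L) w * zsg (M - L) w) * zsg (M \<inter> L) w"
    by (simp add: mult.assoc)
  thus ?thesis by (simp add: zsg_sq)
qed

lemma flip_bij: "1 \<le> l \<Longrightarrow> l \<le> N \<Longrightarrow> bij_betw (\<lambda>w. flip w l) {..<2^N} {..<2^N}"
  by (rule bij_betw_byWitness[where f' = "\<lambda>w. flip w l"]) (auto simp: flip_lt)

lemma sign_sum_zero: "finite K \<Longrightarrow> K \<subseteq> {1..N} \<Longrightarrow> l \<in> K \<Longrightarrow> (\<Sum>w<2^N. zsg K w) = 0"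
proof -
  assume K: "finite K" "K \<subseteq> {1..N}" "l \<in> K"
  hence l: "1 \<le> l" "l \<le> N" by auto
  have neg: "zsg K (flip w l) = - zsg K w" for w
  proof -
    have "zsg (K - {l}) (flip w l) = zsg (K - {l}) w"
      by (rule zsg_flip) (use K l in auto)
    moreover have "zs1 l (flip w l) = - zs1 l w"
      using l qbit_le1[of w l] by (auto simp: zs1_def qbit_flip)
    moreover have "zsg K x = zs1 l x * zsg (K - {l}) x" for x
      unfolding zsg_def using K(1,3) by (rule prod.remove)
    ultimately show ?thesis by simp
  qed
  have "(\<Sum>w<2^N. zsg K w) = (\<Sum>w<2^N. zsg K (flip w l))"
    using sum.reindex_bij_betw[OF flip_bij[OF l], of "zsg K"] by simp
  also have "\<dots> = - (\<Sum>w<2^N. zsg K w)" by (simp only: neg sum_negf)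
  finally show ?thesis by simp
qed

lemma sign_sum_empty: "(\<Sum>w<(2::nat)^N. zsg {} w) = 2^N"
  by (simp add: zsg_def)



definition good :: "nat \<Rightarrow> graph \<Rightarrow> bool" where
  "good N H \<longleftrightarrow> verts H = {1..N} \<and>
     (\<forall>a b. (a,b) \<in> edges H \<longrightarrow> a \<in> {1..N} \<and> b \<in> {1..N} \<and> a \<noteq> b \<and> (b,a) \<in> edges H)"

lemma good_nbrs: "good N H \<Longrightarrow> nbrs H i \<subseteq> {1..N}"
  unfolding good_def nbrs_def by auto
lemma good_fin: "good N H \<Longrightarrow> finite (nbrs H i)"
  by (rule finite_subset[OF good_nbrs]) auto
lemma good_irr: "good N H \<Longrightarrow> i \<notin> nbrs H i"
  unfolding good_def nbrs_def by auto
lemma good_0: "good N H \<Longrightarrow> 0 \<notin> nbrs H i"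
  using good_nbrs[of N H i] by auto
lemma good_sym: "good N H \<Longrightarrow> (a,b) \<in> edges H \<longleftrightarrow> (b,a) \<in> edges H"
  unfolding good_def by blast

lemma stab_rel:
  assumes g: "good N H" and v: "v \<in> carrier_vec (2^N)" and s: "Sop N H i *\<^sub>v v = v"
    and i: "1 \<le> i" "i \<le> N" and w: "w < 2^N"
  shows "v $ (flip w i) = zsg (nbrs H i) w * v $ w"
proof -
  let ?r = "flip w i"
  have r: "?r < 2^N" using flip_lt w i by blast
  have "v $ ?r = (Sop N H i *\<^sub>v v) $ ?r" using s by simp
  also have "\<dots> = (\<Sum>c<2^N. Sop N H i $$ (?r, c) * v $ c)"
    using r v carrier_matD[OF Sop_carrier[of N H i]] by (simp add: scalar_prod_def atLeast0LessThan)
  also have "\<dots> = (\<Sum>c<2^N. if c = w then zsg (nbrs H i) w * v $ w else 0)"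
  proof (rule sum.cong[OF refl])
    fix c :: nat assume c: "c \<in> {..<2^N}"
    have "flip w i = flip c i \<longleftrightarrow> c = w"
    proof
      assume "flip w i = flip c i"
      hence "flip (flip w i) i = flip (flip c i) i" by simp
      thus "c = w" by simp
    qed simp
    thus "Sop N H i $$ (?r, c) * v $ c = (if c = w then zsg (nbrs H i) w * v $ w else 0)"
      using c r by (auto simp: Sop_entry good_fin[OF g])
  qed
  also have "\<dots> = zsg (nbrs H i) w * v $ w" using w by simp
  finally show ?thesis .
qed

lemma flip_induct:
  assumes P0: "P 0" and step: "\<And>w i. w < 2^N \<Longrightarrow> 1 \<le> i \<Longrightarrow> i \<le> N \<Longrightarrow> P w \<Longrightarrow> P (flip w i)"
  shows "w < 2^N \<Longrightarrow> P w"
proof (induction w rule: less_induct)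
  case (less w)
  show ?case
  proof (cases "w = 0")
    case True thus ?thesis using P0 by simp
  next
    case False
    have "\<exists>n. bit w n"
    proof (rule ccontr)
      assume "\<not> (\<exists>n. bit w n)"
      hence "w = 0" by (intro bit_eqI) auto
      thus False using False by simp
    qed
    then obtain n where n: "bit w n" by blast
    have "\<forall>n. bit w n \<longrightarrow> n < N" using less.prems lt_pow_iff by metis
    hence nN: "n < N" using n by blast
    define w' where "w' = flip w (Suc n)"
    have "qbit w (Suc n) \<noteq> 0" using n by (simp add: qbit0_iff)
    hence "w' = w - 2 ^ (Suc n - 1)" unfolding w'_def flip_def by (rule if_not_P)
    hence "w' = w - 2 ^ n" by (simp only: diff_Suc_1)
    moreover have "0 < w" using False by simp
    ultimately have lt: "w' < w" by simp
    have w'lt: "w' < 2^N" using lt less.prems by simp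
    have "P w'" using less.IH[OF lt w'lt] .
    hence "P (flip w' (Suc n))" using step[OF w'lt _ _] nN by simp
    thus ?thesis unfolding w'_def by simp
  qed
qed



definition hh :: "graph \<Rightarrow> nat \<Rightarrow> nat \<Rightarrow> nat \<Rightarrow> complex" where
  "hh H x a b = (if a < b \<and> (a,b) \<in> edges H \<and> qbit x a \<noteq> 0 \<and> qbit x b \<noteq> 0 then -1 else 1)"

definition sg :: "nat \<Rightarrow> graph \<Rightarrow> nat \<Rightarrow> complex" where
  "sg N H x = (\<Prod>a\<in>{1..N}. \<Prod>b\<in>{1..N}. hh H x a b)"

lemma sg_sq: "sg N H x * sg N H x = 1"
proof -
  have "sg N H x * sg N H x = (\<Prod>a\<in>{1..N}. \<Prod>b\<in>{1..N}. hh H x a b * hh H x a b)"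
    unfolding sg_def prod.distrib[symmetric] ..
  also have "\<dots> = 1" by (intro prod.neutral ballI) (simp add: hh_def)
  finally show ?thesis .
qed

lemma sg_norm: "cmod (sg N H x) = 1"
  unfolding sg_def prod_norm[symmetric] by (intro prod.neutral ballI) (simp add: hh_def)

lemma hh_flip:
  assumes g: "good N H" and i: "1 \<le> i" "i \<le> N" and ab: "a \<in> {1..N}" "b \<in> {1..N}"
  shows "hh H (flip x i) a b * hh H x a b =
    (if a = i then (if i < b \<and> (i,b) \<in> edges H \<and> qbit x b \<noteq> 0 then -1 else 1) else 1) *
    (if b = i then (if a < i \<and> (a,i) \<in> edges H \<and> qbit x a \<noteq> 0 then -1 else 1) else 1)"
proof -
  have q: "qbit x j \<le> 1" for j by (rule qbit_le1)
  have qa: "qbit (flip x i) a = (if a = i then 1 - qbit x i else qbit x a)"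
    using ab i by (simp add: qbit_flip)
  have qb: "qbit (flip x i) b = (if b = i then 1 - qbit x i else qbit x b)"
    using ab i by (simp add: qbit_flip)
  show ?thesis
    unfolding hh_def qa qb using q[of i] q[of a] q[of b]
    by (cases "a = i"; cases "b = i"; cases "a < b"; auto)
qed

lemma sg_flip:
  assumes g: "good N H" and i: "1 \<le> i" "i \<le> N"
  shows "sg N H (flip x i) = zsg (nbrs H i) x * sg N H x"
proof -
  define A where "A b = (if i < b \<and> (i,b) \<in> edges H \<and> qbit x b \<noteq> 0 then -1 else 1 :: complex)" for b
  define B where "B a = (if a < i \<and> (a,i) \<in> edges H \<and> qbit x a \<noteq> 0 then -1 else 1 :: complex)" for a
  have iN: "i \<in> {1..N}" using i by auto
  have "sg N H (flip x i) * sg N H x =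
        (\<Prod>a\<in>{1..N}. \<Prod>b\<in>{1..N}. hh H (flip x i) a b * hh H x a b)"
    unfolding sg_def prod.distrib[symmetric] ..
  also have "\<dots> = (\<Prod>a\<in>{1..N}. \<Prod>b\<in>{1..N}. (if a = i then A b else 1) * (if b = i then B a else 1))"
    by (intro prod.cong refl) (simp add: hh_flip[OF g i] A_def B_def)
  also have "\<dots> = (\<Prod>a\<in>{1..N}. (if a = i then prod A {1..N} else 1) * B a)"
  proof (rule prod.cong[OF refl])
    fix a assume a: "a \<in> {1..N}"
    have "(\<Prod>b\<in>{1..N}. (if a = i then A b else 1) * (if b = i then B a else 1))
        = (\<Prod>b\<in>{1..N}. (if a = i then A b else 1)) * (\<Prod>b\<in>{1..N}. (if b = i then B a else 1))"
      by (rule prod.distrib)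
    also have "(\<Prod>b\<in>{1..N}. (if b = i then B a else 1)) = B a"
      using iN by (simp add: prod.delta)
    also have "(\<Prod>b\<in>{1..N}. (if a = i then A b else 1)) = (if a = i then prod A {1..N} else 1)"
      by simp
    finally show "(\<Prod>b\<in>{1..N}. (if a = i then A b else 1) * (if b = i then B a else 1))
        = (if a = i then prod A {1..N} else 1) * B a" .
  qed
  also have "\<dots> = prod A {1..N} * prod B {1..N}"
    unfolding prod.distrib using iN by (simp add: prod.delta)
  also have "\<dots> = (\<Prod>j\<in>{1..N}. A j * B j)" by (rule prod.distrib[symmetric])
  also have "\<dots> = (\<Prod>j\<in>{1..N}. if j \<in> nbrs H i then zs1 j x else 1)"
  proof (rule prod.cong[OF refl])
    fix j assume j: "j \<in> {1..N}"
    have sym: "(j,i) \<in> edges H \<longleftrightarrow> (i,j) \<in> edges H" using good_sym[OF g] by blast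
    have irr: "(i,i) \<notin> edges H" using good_irr[OF g, of i] by (simp add: nbrs_def)
    show "A j * B j = (if j \<in> nbrs H i then zs1 j x else 1)"
      unfolding A_def B_def zs1_def nbrs_def using sym irr
      by (cases "i < j"; cases "j < i"; auto)
  qed
  also have "\<dots> = (\<Prod>j\<in>{1..N} \<inter> nbrs H i. zs1 j x)"
    by (rule prod.inter_restrict[symmetric]) simp
  also have "{1..N} \<inter> nbrs H i = nbrs H i"
    using good_nbrs[OF g, of i] by blast
  also have "(\<Prod>j\<in>nbrs H i. zs1 j x) = zsg (nbrs H i) x" by (simp add: zsg_def)
  finally have e: "sg N H (flip x i) * sg N H x = zsg (nbrs H i) x" .
  have "sg N H (flip x i) = sg N H (flip x i) * (sg N H x * sg N H x)" by (simp add: sg_sq)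
  also have "\<dots> = zsg (nbrs H i) x * sg N H x" using e by (simp add: mult.assoc[symmetric])
  finally show ?thesis .
qed



definition stabv :: "nat \<Rightarrow> graph \<Rightarrow> complex vec \<Rightarrow> bool" where
  "stabv N H v \<longleftrightarrow> v \<in> carrier_vec (2 ^ N) \<and> (\<Sum>a<2 ^ N. (cmod (v $ a))\<^sup>2) = 1 \<and>
      (\<forall>i \<in> verts H. Sop N H i *\<^sub>v v = v)"

definition gvec :: "nat \<Rightarrow> graph \<Rightarrow> complex vec" where
  "gvec N H = vec (2^N) (\<lambda>w. sg N H w / complex_of_real (sqrt (2^N)))"

lemma Sop_mult_vec_entry:
  assumes g: "good N H" and v: "v \<in> carrier_vec (2^N)" and i: "1 \<le> i" "i \<le> N" and r: "r < 2^N"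
  shows "(Sop N H i *\<^sub>v v) $ r = zsg (nbrs H i) (flip r i) * v $ (flip r i)"
proof -
  have fr: "flip r i < 2^N" using flip_lt r i by blast
  have "(Sop N H i *\<^sub>v v) $ r = (\<Sum>c<2^N. Sop N H i $$ (r, c) * v $ c)"
    using r v carrier_matD[OF Sop_carrier[of N H i]] by (simp add: scalar_prod_def atLeast0LessThan)
  also have "\<dots> = (\<Sum>c<2^N. if c = flip r i then zsg (nbrs H i) (flip r i) * v $ (flip r i) else 0)"
  proof (rule sum.cong[OF refl])
    fix c :: nat assume c: "c \<in> {..<2^N}"
    have "r = flip c i \<longleftrightarrow> c = flip r i"
    proof
      assume "r = flip c i" thus "c = flip r i" by simp
    next
      assume "c = flip r i" thus "r = flip c i" by simp
    qed
    thus "Sop N H i $$ (r, c) * v $ c = (if c = flip r i then zsg (nbrs H i) (flip r i) * v $ (flip r i) else 0)"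
      using c r by (auto simp: Sop_entry good_fin[OF g])
  qed
  also have "\<dots> = zsg (nbrs H i) (flip r i) * v $ (flip r i)" using fr by simp
  finally show ?thesis .
qed

lemma gvec_stab: "good N H \<Longrightarrow> stabv N H (gvec N H)"
proof -
  assume g: "good N H"
  have "(cmod (gvec N H $ a))\<^sup>2 = 1 / 2^N" if "a < 2^N" for a
    using that by (simp add: gvec_def norm_divide sg_norm power_divide)
  hence "(\<Sum>a<2 ^ N. (cmod (gvec N H $ a))\<^sup>2) = (\<Sum>a<(2::nat) ^ N. 1 / 2^N)" by simp
  also have "\<dots> = 1" by simp
  finally have n: "(\<Sum>a<2 ^ N. (cmod (gvec N H $ a))\<^sup>2) = 1" .
  have s: "Sop N H i *\<^sub>v gvec N H = gvec N H" if i: "i \<in> {1..N}" for i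
  proof (rule eq_vecI)
    fix r assume "r < dim_vec (gvec N H)"
    hence r: "r < 2^N" by (simp add: gvec_def)
    have fr: "flip r i < 2^N" using flip_lt r i by auto
    have "sg N H (flip (flip r i) i) = zsg (nbrs H i) (flip r i) * sg N H (flip r i)"
      by (rule sg_flip[OF g]) (use i in auto)
    hence hs: "sg N H r = zsg (nbrs H i) (flip r i) * sg N H (flip r i)" by simp
    have "(Sop N H i *\<^sub>v gvec N H) $ r = zsg (nbrs H i) (flip r i) * gvec N H $ (flip r i)"
      by (rule Sop_mult_vec_entry[OF g _ _ _ r]) (use i in \<open>auto simp: gvec_def\<close>)
    also have "\<dots> = zsg (nbrs H i) (flip r i) * (sg N H (flip r i) / complex_of_real (sqrt (2^N)))"
      using fr by (simp add: gvec_def)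
    also have "\<dots> = sg N H r / complex_of_real (sqrt (2^N))" unfolding hs by simp
    also have "\<dots> = gvec N H $ r" using r by (simp add: gvec_def)
    finally show "(Sop N H i *\<^sub>v gvec N H) $ r = gvec N H $ r" .
  qed (use carrier_matD[OF Sop_carrier[of N H i]] in \<open>simp add: gvec_def\<close>)
  show ?thesis unfolding stabv_def using n s g unfolding good_def by (auto simp: gvec_def)
qed

lemma stab_flip: "good N H \<Longrightarrow> stabv N H v \<Longrightarrow> 1 \<le> i \<Longrightarrow> i \<le> N \<Longrightarrow> w < 2^N \<Longrightarrow>
   v $ (flip w i) = zsg (nbrs H i) w * v $ w"
proof -
  assume g: "good N H" and v: "stabv N H v" and i: "1 \<le> i" "i \<le> N" and w: "w < 2^N"
  have "verts H = {1..N}" using g unfolding good_def by blast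
  hence "i \<in> verts H" using i by simp
  hence s: "Sop N H i *\<^sub>v v = v" using v unfolding stabv_def by blast
  have c: "v \<in> carrier_vec (2^N)" using v unfolding stabv_def by blast
  show ?thesis by (rule stab_rel[OF g c s i w])
qed

lemma stab_mod: assumes g: "good N H" and v: "stabv N H v" and w: "w < 2^N"
  shows "cmod (v $ w) = cmod (v $ 0)"
proof (rule flip_induct[where P = "\<lambda>w. cmod (v $ w) = cmod (v $ 0)" and N = N, OF _ _ w])
  show "cmod (v $ 0) = cmod (v $ 0)" by (rule refl)
next
  fix w i assume h: "w < 2^N" "1 \<le> i" "i \<le> N" "cmod (v $ w) = cmod (v $ 0)"
  have "v $ flip w i = zsg (nbrs H i) w * v $ w" by (rule stab_flip[OF g v h(2,3,1)])
  hence "cmod (v $ flip w i) = cmod (v $ w)" by (simp add: norm_mult zsg_norm)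
  thus "cmod (v $ flip w i) = cmod (v $ 0)" using h(4) by simp
qed

lemma stab_mod2: assumes g: "good N H" and v: "stabv N H v" and w: "w < 2^N"
  shows "(cmod (v $ w))\<^sup>2 = 1 / 2^N"
proof -
  have "(\<Sum>a<(2::nat)^N. (cmod (v $ a))\<^sup>2) = 1" using v unfolding stabv_def by blast
  hence "1 = (\<Sum>a<(2::nat)^N. (cmod (v $ a))\<^sup>2)" by (rule sym)
  also have "\<dots> = (\<Sum>a<(2::nat)^N. (cmod (v $ 0))\<^sup>2)"
  proof (rule sum.cong[OF refl])
    fix a assume "a \<in> {..<(2::nat)^N}"
    hence "cmod (v $ a) = cmod (v $ 0)" by (intro stab_mod[OF g v]) simp
    thus "(cmod (v $ a))\<^sup>2 = (cmod (v $ 0))\<^sup>2" by (rule arg_cong)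
  qed
  also have "\<dots> = real (2^N) * (cmod (v $ 0))\<^sup>2" by (simp only: sum_constant card_lessThan)
  finally have e: "real (2^N) * (cmod (v $ 0))\<^sup>2 = 1" by simp
  have "(cmod (v $ 0))\<^sup>2 = 1 / real (2^N)"
    using e by (simp add: eq_divide_eq mult.commute)
  thus ?thesis using stab_mod[OF g v w] by simp
qed

lemma stab_ratio: assumes g: "good N H" and v: "stabv N H v" and u: "stabv N H u" and w: "w < 2^N"
  shows "v $ w * u $ 0 = u $ w * v $ 0"
proof (rule flip_induct[where P = "\<lambda>w. v $ w * u $ 0 = u $ w * v $ 0" and N = N, OF _ _ w])
  show "v $ 0 * u $ 0 = u $ 0 * v $ 0" by (rule mult.commute)
next
  fix w i assume h: "w < 2^N" "1 \<le> i" "i \<le> N" "v $ w * u $ 0 = u $ w * v $ 0"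
  have a: "v $ flip w i = zsg (nbrs H i) w * v $ w" by (rule stab_flip[OF g v h(2,3,1)])
  have b: "u $ flip w i = zsg (nbrs H i) w * u $ w" by (rule stab_flip[OF g u h(2,3,1)])
  have "v $ flip w i * u $ 0 = zsg (nbrs H i) w * (v $ w * u $ 0)" unfolding a by (rule mult.assoc)
  also have "\<dots> = zsg (nbrs H i) w * (u $ w * v $ 0)" unfolding h(4) ..
  also have "\<dots> = u $ flip w i * v $ 0" unfolding b by (rule mult.assoc[symmetric])
  finally show "v $ flip w i * u $ 0 = u $ flip w i * v $ 0" .
qed

lemma outer_index: "a < dim_vec v \<Longrightarrow> b < dim_vec v \<Longrightarrow> outer v $$ (a, b) = v $ a * cnj (v $ b)"
  by (simp add: outer_def)

lemma cmod_sq_cnj: "z * cnj z = complex_of_real ((cmod z)\<^sup>2)"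
  by (simp add: complex_mult_cnj cmod_def)

lemma stab_outer_eq: assumes g: "good N H" and v: "stabv N H v" and u: "stabv N H u"
  shows "outer v = outer u"
proof -
  have dv: "dim_vec v = 2^N" and du: "dim_vec u = 2^N" using v u by (auto simp: stabv_def)
  have m0: "v $ 0 * cnj (v $ 0) = u $ 0 * cnj (u $ 0)"
    unfolding cmod_sq_cnj using stab_mod2[OF g v, of 0] stab_mod2[OF g u, of 0] by simp
  have nz: "v $ 0 * cnj (v $ 0) \<noteq> 0"
    unfolding cmod_sq_cnj using stab_mod2[OF g v, of 0] by simp
  show ?thesis
  proof (rule eq_matI)
    fix a b assume "a < dim_row (outer u)" "b < dim_col (outer u)"
    hence ab: "a < 2^N" "b < 2^N" using du by (auto simp: outer_def)
    have ra: "v $ a * u $ 0 = u $ a * v $ 0" and rb: "v $ b * u $ 0 = u $ b * v $ 0"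
      using stab_ratio[OF g v u] ab by blast+
    have "(v $ a * cnj (v $ b)) * (v $ 0 * cnj (v $ 0)) = (v $ a * cnj (v $ b)) * (u $ 0 * cnj (u $ 0))"
      using m0 by simp
    also have "\<dots> = (v $ a * u $ 0) * cnj (v $ b * u $ 0)" by (simp add: algebra_simps)
    also have "\<dots> = (u $ a * v $ 0) * cnj (u $ b * v $ 0)" using ra rb by simp
    also have "\<dots> = (u $ a * cnj (u $ b)) * (v $ 0 * cnj (v $ 0))" by (simp add: algebra_simps)
    finally have "v $ a * cnj (v $ b) = u $ a * cnj (u $ b)" using nz by simp
    thus "outer v $$ (a, b) = outer u $$ (a, b)" using ab dv du by (simp add: outer_index)
  qed (use dv du in \<open>auto simp: outer_def\<close>)
qed

lemma dm_char: assumes g: "good N H"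
  shows "\<exists>v. stabv N H v \<and> graph_state_dm N H = outer v"
proof -
  let ?P = "\<lambda>\<rho>. \<exists>v \<in> carrier_vec (2 ^ N).
      (\<Sum>a<2 ^ N. (cmod (v $ a))\<^sup>2) = 1 \<and>
      (\<forall>i \<in> verts H. Sop N H i *\<^sub>v v = v) \<and> \<rho> = outer v"
  have P: "?P \<rho> \<longleftrightarrow> (\<exists>v. stabv N H v \<and> \<rho> = outer v)" for \<rho>
    unfolding stabv_def by blast
  have ex1: "\<exists>!\<rho>. ?P \<rho>"
  proof (rule ex1I)
    show "?P (outer (gvec N H))" unfolding P using gvec_stab[OF g] by blast
  next
    fix \<rho> assume "?P \<rho>"
    then obtain v where "stabv N H v" "\<rho> = outer v" unfolding P by blast
    thus "\<rho> = outer (gvec N H)" using stab_outer_eq[OF g _ gvec_stab[OF g]] by blast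
  qed
  have "?P (graph_state_dm N H)" unfolding graph_state_dm_def by (rule theI'[OF ex1])
  thus ?thesis unfolding P by blast
qed

lemma dm_entry: assumes g: "good N H" and i: "1 \<le> i" "i \<le> N" and w: "w < 2^N"
  shows "graph_state_dm N H $$ (flip w i, w) = zsg (nbrs H i) w / 2^N"
proof -
  obtain v where v: "stabv N H v" and d: "graph_state_dm N H = outer v" using dm_char[OF g] by blast
  have dv: "dim_vec v = 2^N" using v by (auto simp: stabv_def)
  have "graph_state_dm N H $$ (flip w i, w) = v $ (flip w i) * cnj (v $ w)"
    using d dv w flip_lt[OF w i] by (simp add: outer_index)
  also have "\<dots> = zsg (nbrs H i) w * (v $ w * cnj (v $ w))"
    using stab_flip[OF g v i w] by simp
  also have "\<dots> = zsg (nbrs H i) w / 2^N"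
    unfolding cmod_sq_cnj stab_mod2[OF g v w] by simp
  finally show ?thesis .
qed



lemma expect_gen:
  assumes g: "good N G" and L: "L \<subseteq> {1..N}" and i: "1 \<le> i" "i \<le> N"
    and sub: "nbrs H i \<subseteq> nbrs G i" and eq: "i \<notin> L \<Longrightarrow> nbrs H i - L = nbrs G i - L"
  shows "expect (Sop N H i) (lost_state N L (graph_state_dm N G)) =
           (if i \<in> L then 0 else if nbrs G i \<inter> L = {} then 1 else 0)"
proof -
  let ?D = "graph_state_dm N G"
  let ?\<rho> = "lost_state N L ?D"
  have finH: "finite (nbrs H i)" using good_fin[OF g] sub finite_subset by blast
  have irrH: "i \<notin> nbrs H i" using good_irr[OF g, of i] sub by blast
  have zH: "0 \<notin> nbrs H i" using good_0[OF g, of i] sub by blast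
  have subH: "nbrs H i \<subseteq> {1..N}" using good_nbrs[OF g, of i] sub by blast
  have e1: "expect (Sop N H i) ?\<rho> = (\<Sum>a<2^N. zsg (nbrs H i) a * ?\<rho> $$ (flip a i, a))"
    by (rule expect_Sop[OF finH irrH zH i lost_carrier])
  show ?thesis
  proof (cases "i \<in> L")
    case True
    have "?\<rho> $$ (flip a i, a) = 0" if a: "a < 2^N" for a
    proof -
      have "qbit (flip a i) i = 1 - qbit a i" using i by (simp add: qbit_flip)
      hence "\<not> (qbit (flip a i) i = 0 \<and> qbit a i = 0)" by auto
      hence c: "\<not> (\<forall>l\<in>L. qbit (flip a i) l = 0 \<and> qbit a l = 0)" using True by blast
      show ?thesis by (simp only: lost_entry[OF flip_lt[OF a i] a] if_not_P[OF c])
    qed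
    hence "expect (Sop N H i) ?\<rho> = 0" unfolding e1 by simp
    thus ?thesis using True by simp
  next
    case False
    have "expect (Sop N H i) ?\<rho> = (\<Sum>w<2^N. zsg (nbrs H i - L) w * ?D $$ (flip w i, w))"
      unfolding e1 by (rule lost_eval[OF L i False finH subH])
    also have "\<dots> = (\<Sum>w<2^N. zsg (nbrs G i \<inter> L) w / 2^N)"
    proof (rule sum.cong[OF refl])
      fix w :: nat assume w: "w \<in> {..<2^N}"
      have "zsg (nbrs H i - L) w * ?D $$ (flip w i, w) = zsg (nbrs G i - L) w * (zsg (nbrs G i) w / 2^N)"
        using dm_entry[OF g i, of w] w eq[OF False] by simp
      also have "\<dots> = zsg (nbrs G i \<inter> L) w / 2^N"
        using zsg_diff_mult[OF good_fin[OF g], of i L w] by (simp add: mult.assoc[symmetric])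
      finally show "zsg (nbrs H i - L) w * ?D $$ (flip w i, w) = zsg (nbrs G i \<inter> L) w / 2^N" .
    qed
    also have "\<dots> = (\<Sum>w<2^N. zsg (nbrs G i \<inter> L) w) / 2^N"
      by (simp add: sum_divide_distrib)
    also have "\<dots> = (if nbrs G i \<inter> L = {} then 1 else 0)"
    proof (cases "nbrs G i \<inter> L = {}")
      case True
      thus ?thesis using sign_sum_empty[of N] by simp
    next
      case F: False
      then obtain l where l: "l \<in> nbrs G i \<inter> L" by blast
      have "(\<Sum>w<2^N. zsg (nbrs G i \<inter> L) w) = 0"
        by (rule sign_sum_zero[OF _ _ l]) (use good_fin[OF g, of i] good_nbrs[OF g, of i] in auto)
      thus ?thesis using F by simp
    qed
    finally show ?thesis using False by simp
  qed
qed



lemma expect_Iop: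
  assumes fn: "finite (nbrs H r)" and fv: "finite (verts H - cnbrs H r)"
    and R: "R \<in> carrier_mat (2^N) (2^N)"
  shows "expect (Iop N H r) R =
     complex_of_real (sqrt 2 * real (nmax H)) * expect (Sop N H r) R
   + complex_of_real (sqrt 2) * (\<Sum>i\<in>nbrs H r. expect (Sop N H i) R)
   + (\<Sum>i\<in>verts H - cnbrs H r. expect (Sop N H i) R)"
proof -
  let ?A = "complex_of_real (sqrt 2 * real (nmax H)) \<cdot>\<^sub>m Sop N H r"
  let ?B = "complex_of_real (sqrt 2) \<cdot>\<^sub>m msum N (map (Sop N H) (sorted_list_of_set (nbrs H r)))"
  let ?C = "msum N (map (Sop N H) (sorted_list_of_set (verts H - cnbrs H r)))"
  have mB: "msum N (map (Sop N H) (sorted_list_of_set (nbrs H r))) \<in> carrier_mat (2^N) (2^N)"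
    by (rule msum_carrier) auto
  have cA: "?A \<in> carrier_mat (2^N) (2^N)" by simp
  have cB: "?B \<in> carrier_mat (2^N) (2^N)" using mB by simp
  have cC: "?C \<in> carrier_mat (2^N) (2^N)" by (rule msum_carrier) auto
  have "expect (Iop N H r) R = expect (?A + ?B + ?C) R" by (simp add: Iop_def)
  also have "\<dots> = expect (?A + ?B) R + expect ?C R"
    by (rule expect_add) (use cA cB cC R in auto)
  also have "expect (?A + ?B) R = expect ?A R + expect ?B R"
    by (rule expect_add[OF cA cB R])
  also have "expect ?A R = complex_of_real (sqrt 2 * real (nmax H)) * expect (Sop N H r) R"
    by (rule expect_smult[OF Sop_carrier R])
  also have "expect ?B R = complex_of_real (sqrt 2) * (\<Sum>i\<in>nbrs H r. expect (Sop N H i) R)"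
    by (simp add: expect_smult[OF mB R] expect_msum_set[OF fn R])
  also have "expect ?C R = (\<Sum>i\<in>verts H - cnbrs H r. expect (Sop N H i) R)"
    by (rule expect_msum_set[OF fv R])
  finally show ?thesis .
qed

lemma dc_edges: "(a,b) \<in> edges (dense_center m) \<longleftrightarrow>
   (a \<in> {1..m} \<and> b \<in> {1..m} \<and> a \<noteq> b) \<or> (a \<in> {1..m} \<and> b = m + a) \<or> (b \<in> {1..m} \<and> a = m + b)"
  by (auto simp: dense_center_def edges_def)

lemma dc_verts: "verts (dense_center m) = {1..2*m}"
  by (simp add: dense_center_def verts_def)

lemma dc_good: "1 \<le> m \<Longrightarrow> good (2*m) (dense_center m)"
  unfolding good_def dc_verts dc_edges by auto

lemma nbrs_c: "c \<in> {1..m} \<Longrightarrow> nbrs (dense_center m) c = insert (m + c) ({1..m} - {c})"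
  unfolding nbrs_def dc_edges by auto

lemma nbrs_l: "k \<in> {1..m} \<Longrightarrow> nbrs (dense_center m) (m + k) = {k}"
  unfolding nbrs_def dc_edges by auto

lemma vcases: "(v::nat) \<in> {1..2*m} \<Longrightarrow> v \<in> {1..m} \<or> (\<exists>k\<in>{1..m}. v = m + k)"
proof -
  assume v: "v \<in> {1..2*m}"
  show ?thesis
  proof (cases "v \<le> m")
    case True thus ?thesis using v by auto
  next
    case False
    hence "v - m \<in> {1..m}" "v = m + (v - m)" using v by auto
    thus ?thesis by blast
  qed
qed

lemma deg_c: "c \<in> {1..m} \<Longrightarrow> deg (dense_center m) c = m"
proof -
  assume c: "c \<in> {1..m}"
  have "m + c \<notin> {1..m} - {c}" using c by auto
  hence "card (insert (m + c) ({1..m} - {c})) = Suc (card ({1..m} - {c}))" by simp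
  also have "card ({1..m} - {c}) = m - 1" using c by simp
  finally show ?thesis unfolding deg_def nbrs_c[OF c] using c by simp
qed

lemma deg_l: "k \<in> {1..m} \<Longrightarrow> deg (dense_center m) (m + k) = 1"
  unfolding deg_def by (simp add: nbrs_l)

lemma nmax_dc: "2 \<le> m \<Longrightarrow> nmax (dense_center m) = m"
  unfolding nmax_def dc_verts
proof (rule Max_eqI)
  assume m: "2 \<le> m"
  show "finite (deg (dense_center m) ` {1..2*m})" by simp
  show "m \<in> deg (dense_center m) ` {1..2*m}"
    using deg_c[of 1 m] m by (intro image_eqI[of _ _ 1]) auto
  fix y assume "y \<in> deg (dense_center m) ` {1..2*m}"
  then obtain v where v: "v \<in> {1..2*m}" "y = deg (dense_center m) v" by blast
  from vcases[OF v(1)] show "y \<le> m"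
  proof
    assume "v \<in> {1..m}" thus ?thesis using v deg_c by simp
  next
    assume "\<exists>k\<in>{1..m}. v = m + k"
    then obtain k where "k \<in> {1..m}" "v = m + k" by blast
    thus ?thesis using v deg_l m by simp
  qed
qed

lemma roots_dc: "2 \<le> m \<Longrightarrow> roots (dense_center m) = {1..m}"
proof -
  assume m: "2 \<le> m"
  show ?thesis
  proof
    show "roots (dense_center m) \<subseteq> {1..m}"
    proof
      fix v assume "v \<in> roots (dense_center m)"
      hence v: "v \<in> {1..2*m}" "deg (dense_center m) v = m"
        unfolding roots_def nmax_dc[OF m] dc_verts by auto
      from vcases[OF v(1)] show "v \<in> {1..m}"
      proof
        assume "\<exists>k\<in>{1..m}. v = m + k"
        then obtain k where "k \<in> {1..m}" "v = m + k" by blast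
        thus ?thesis using v deg_l m by simp
      qed
    qed
  next
    show "{1..m} \<subseteq> roots (dense_center m)"
      unfolding roots_def nmax_dc[OF m] dc_verts using deg_c by auto
  qed
qed

lemma induced_verts: "verts (induced_del H L) = verts H - L"
  by (simp add: induced_del_def verts_def)

lemma induced_nbrs: "nbrs (induced_del H L) i = (if i \<in> L then {} else nbrs H i - L)"
  by (auto simp: induced_del_def nbrs_def edges_def)



lemma ind_sum: "finite S \<Longrightarrow> (\<Sum>i\<in>S. (if i \<in> L then 0 else 1::complex)) = of_nat (card (S - L))"
proof -
  assume f: "finite S"
  have "(\<Sum>i\<in>S. (if i \<in> L then 0 else 1::complex)) = (\<Sum>i\<in>S. (if i \<in> -L then 1 else 0::complex))"
    by (rule sum.cong) auto
  also have "\<dots> = (\<Sum>i\<in>S \<inter> -L. 1)" by (rule sum.inter_restrict[OF f, symmetric])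
  also have "S \<inter> -L = S - L" by blast
  finally show ?thesis by simp
qed

theorem mainTheorem7:
  fixes m :: nat
  assumes "m \<ge> 2"
  defines "N \<equiv> 2 * m"
  defines "G \<equiv> dense_center m"
  shows "nmax G = m \<and> roots G = {1..m} \<and> betaC G = 3 / 2 * real N - 1 \<and>
    (\<forall>L j. L \<subseteq> {m + 1..2 * m} \<and> card L < m \<and> j \<in> {1..m} \<and> m + j \<notin> L \<longrightarrow>
      (let G' = induced_del G L;
           \<rho> = lost_state N L (graph_state_dm N G);
           val = (2 * sqrt 2 - 1) * real m + real N - 1 - (sqrt 2 + 1) * real (card L)
       in expect (Iop N G j) \<rho> = complex_of_real val
        \<and> expect (Iop N G' j) \<rho> = complex_of_real val
        \<and> (Re (expect (Iop N G' j) \<rho>) > betaC G'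
             \<longleftrightarrow> real (card L) < (sqrt 2 - 1) / sqrt 2 * real N)
        \<and> (Re (expect (Iop N G j) \<rho>) > betaC G
             \<longleftrightarrow> real (card L) < (sqrt 2 - 1) / (sqrt 2 + 1) * real N)))"
proof -
  have m2: "2 \<le> m" using assms by simp
  have m1: "1 \<le> m" using m2 by simp
  have g: "good N G" using dc_good[OF m1] by (simp add: N_def G_def)
  have nmG: "nmax G = m" unfolding G_def by (rule nmax_dc[OF m2])
  have rG: "roots G = {1..m}" unfolding G_def by (rule roots_dc[OF m2])
  have vG: "verts G = {1..N}" unfolding G_def N_def by (rule dc_verts)
  have cardV: "card (verts G) = 2 * m" using vG N_def by simp
  have bG: "betaC G = 3 * real m - 1" unfolding betaC_def nmG cardV by simp
  have b2: "betaC G = 3 / 2 * real N - 1" unfolding bG N_def by simp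
  have main: "\<forall>L j. L \<subseteq> {m + 1..2 * m} \<and> card L < m \<and> j \<in> {1..m} \<and> m + j \<notin> L \<longrightarrow>
      (let G' = induced_del G L;
           \<rho> = lost_state N L (graph_state_dm N G);
           val = (2 * sqrt 2 - 1) * real m + real N - 1 - (sqrt 2 + 1) * real (card L)
       in expect (Iop N G j) \<rho> = complex_of_real val
        \<and> expect (Iop N G' j) \<rho> = complex_of_real val
        \<and> (Re (expect (Iop N G' j) \<rho>) > betaC G'
             \<longleftrightarrow> real (card L) < (sqrt 2 - 1) / sqrt 2 * real N)
        \<and> (Re (expect (Iop N G j) \<rho>) > betaC G
             \<longleftrightarrow> real (card L) < (sqrt 2 - 1) / (sqrt 2 + 1) * real N))"
  proof (intro allI impI)
    fix L j assume h: "L \<subseteq> {m + 1..2 * m} \<and> card L < m \<and> j \<in> {1..m} \<and> m + j \<notin> L"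
    hence Lsub: "L \<subseteq> {m + 1..2 * m}" and cL: "card L < m" and j: "j \<in> {1..m}" and mj: "m + j \<notin> L"
      by auto
    have LN: "L \<subseteq> {1..N}" using Lsub N_def by auto
    have finL: "finite L" using Lsub finite_subset by blast
    define \<rho> where "\<rho> = lost_state N L (graph_state_dm N G)"
    define G' where "G' = induced_del G L"
    define C' where "C' = {1..m} - {j}"
    define S1 where "S1 = (\<lambda>k. m + k) ` C'"
    define ind where "ind i = (if i \<in> L then 0 else 1::complex)" for i
    have CL: "k \<notin> L" if "k \<in> {1..m}" for k using that Lsub by auto
    have nG_c: "nbrs G k = insert (m + k) ({1..m} - {k})" if "k \<in> {1..m}" for k
      unfolding G_def using nbrs_c[OF that] .
    have nG_l: "nbrs G (m + k) = {k}" if "k \<in> {1..m}" for k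
      unfolding G_def using nbrs_l[OF that] .
    have nG'_eq: "nbrs G' i = nbrs G i - L" if "i \<notin> L" for i
      unfolding G'_def using that by (simp add: induced_nbrs)
    have eG: "expect (Sop N G i) \<rho> = (if i \<in> L then 0 else if nbrs G i \<inter> L = {} then 1 else 0)"
      if "i \<in> {1..N}" for i
      unfolding \<rho>_def by (rule expect_gen[OF g LN]) (use that in auto)
    have eG': "expect (Sop N G' i) \<rho> = (if nbrs G i \<inter> L = {} then 1 else 0)"
      if "i \<in> {1..N}" "i \<notin> L" for i
    proof -
      have "expect (Sop N G' i) \<rho> = (if i \<in> L then 0 else if nbrs G i \<inter> L = {} then 1 else 0)"
        unfolding \<rho>_def by (rule expect_gen[OF g LN]) (use that nG'_eq in auto)
      thus ?thesis using that by simp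
    qed
    have kN: "k \<in> {1..N}" "m + k \<in> {1..N}" if "k \<in> {1..m}" for k using that N_def by auto
    have int_c: "nbrs G k \<inter> L = (if m + k \<in> L then {m + k} else {})" if "k \<in> {1..m}" for k
      using nG_c[OF that] CL by auto
    have eC: "expect (Sop N G k) \<rho> = ind (m + k)" if "k \<in> {1..m}" for k
      using eG[OF kN(1)[OF that]] int_c[OF that] CL[OF that] by (simp add: ind_def)
    have eC': "expect (Sop N G' k) \<rho> = ind (m + k)" if "k \<in> {1..m}" for k
      using eG'[OF kN(1)[OF that] CL[OF that]] int_c[OF that] by (simp add: ind_def)
    have eLf: "expect (Sop N G (m + k)) \<rho> = ind (m + k)" if "k \<in> {1..m}" for k
      using eG[OF kN(2)[OF that]] nG_l[OF that] CL[OF that] by (simp add: ind_def)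
    have eLf': "expect (Sop N G' (m + k)) \<rho> = 1" if "k \<in> {1..m}" "m + k \<notin> L" for k
      using eG'[OF kN(2)[OF that(1)] that(2)] nG_l[OF that(1)] CL[OF that(1)] by simp
    have finC: "finite C'" unfolding C'_def by simp
    have injm: "inj_on (\<lambda>k. m + k) C'" by (simp add: inj_on_def)
    have mjC: "m + j \<notin> C'" using j unfolding C'_def by auto
    have nGj: "nbrs G j = insert (m + j) C'" unfolding C'_def by (rule nG_c[OF j])
    have nG'j: "nbrs G' j = insert (m + j) C'"
      using nG'_eq[OF CL[OF j]] nGj mj CL unfolding C'_def by auto
    have S1eq: "verts G - cnbrs G j = S1"
    proof
      show "verts G - cnbrs G j \<subseteq> S1"
      proof
        fix x assume x: "x \<in> verts G - cnbrs G j"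
        hence x1: "x \<in> {1..2*m}" "x \<noteq> j" "x \<noteq> m + j" "x \<notin> C'"
          unfolding vG N_def cnbrs_def nGj by auto
        hence "\<not> x \<le> m" unfolding C'_def by auto
        hence "x - m \<in> C'" "x = m + (x - m)" using x1 unfolding C'_def by auto
        thus "x \<in> S1" unfolding S1_def by blast
      qed
    next
      show "S1 \<subseteq> verts G - cnbrs G j"
        using j unfolding S1_def vG N_def cnbrs_def nGj C'_def by auto
    qed
    have S1eq': "verts G' - cnbrs G' j = S1 - L"
    proof -
      have "verts G' - cnbrs G' j = (verts G - cnbrs G j) - L"
        unfolding G'_def induced_verts cnbrs_def
        using nG'j nGj unfolding G'_def by auto
      thus ?thesis using S1eq by simp
    qed
    have LS1: "L \<subseteq> S1"
    proof
      fix l assume l: "l \<in> L"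
      have l1: "l \<in> {m+1..2*m}" "l \<noteq> m + j" using l Lsub mj by auto
      hence "l - m \<in> C'" "l = m + (l - m)" unfolding C'_def by auto
      thus "l \<in> S1" unfolding S1_def by blast
    qed
    have finS1: "finite S1" unfolding S1_def using finC by simp
    have cS1: "card S1 = m - 1" unfolding S1_def C'_def using card_image[OF injm] j
      unfolding C'_def by simp
    define K where "K = card (S1 - L)"
    have cK: "K = m - 1 - card L" unfolding K_def using card_Diff_subset[OF finL LS1] cS1 by simp
    have sumS1: "(\<Sum>i\<in>S1. ind i) = of_nat K"
      unfolding ind_def K_def by (rule ind_sum[OF finS1])
    have sumC: "(\<Sum>k\<in>C'. ind (m + k)) = of_nat K"
    proof -
      have "(\<Sum>k\<in>C'. ind (m + k)) = (\<Sum>i\<in>S1. ind i)"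
        unfolding S1_def by (rule sum.reindex[OF injm, symmetric, unfolded comp_def])
      thus ?thesis using sumS1 by simp
    qed
    have Cm: "k \<in> {1..m}" if "k \<in> C'" for k using that unfolding C'_def by auto
    have sn: "(\<Sum>i\<in>nbrs G j. expect (Sop N G i) \<rho>) = 1 + of_nat K"
    proof -
      have "(\<Sum>i\<in>nbrs G j. expect (Sop N G i) \<rho>) = expect (Sop N G (m + j)) \<rho> + (\<Sum>k\<in>C'. expect (Sop N G k) \<rho>)"
        unfolding nGj using finC mjC by simp
      also have "(\<Sum>k\<in>C'. expect (Sop N G k) \<rho>) = (\<Sum>k\<in>C'. ind (m + k))"
        by (rule sum.cong[OF refl]) (rule eC[OF Cm], assumption)
      finally show ?thesis using eLf[OF j] mj sumC by (simp add: ind_def)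
    qed
    have sn': "(\<Sum>i\<in>nbrs G' j. expect (Sop N G' i) \<rho>) = 1 + of_nat K"
    proof -
      have "(\<Sum>i\<in>nbrs G' j. expect (Sop N G' i) \<rho>) = expect (Sop N G' (m + j)) \<rho> + (\<Sum>k\<in>C'. expect (Sop N G' k) \<rho>)"
        unfolding nG'j using finC mjC by simp
      also have "(\<Sum>k\<in>C'. expect (Sop N G' k) \<rho>) = (\<Sum>k\<in>C'. ind (m + k))"
        by (rule sum.cong[OF refl]) (rule eC'[OF Cm], assumption)
      finally show ?thesis using eLf'[OF j mj] sumC by simp
    qed
    have sv: "(\<Sum>i\<in>verts G - cnbrs G j. expect (Sop N G i) \<rho>) = of_nat K"
    proof -
      have "(\<Sum>i\<in>verts G - cnbrs G j. expect (Sop N G i) \<rho>) = (\<Sum>i\<in>S1. ind i)"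
        unfolding S1eq
      proof (rule sum.cong[OF refl])
        fix i assume "i \<in> S1"
        then obtain k where k: "k \<in> C'" "i = m + k" unfolding S1_def by blast
        thus "expect (Sop N G i) \<rho> = ind i" using eLf[OF Cm[OF k(1)]] by simp
      qed
      thus ?thesis using sumS1 by simp
    qed
    have sv': "(\<Sum>i\<in>verts G' - cnbrs G' j. expect (Sop N G' i) \<rho>) = of_nat K"
    proof -
      have "(\<Sum>i\<in>verts G' - cnbrs G' j. expect (Sop N G' i) \<rho>) = (\<Sum>i\<in>S1 - L. 1)"
        unfolding S1eq'
      proof (rule sum.cong[OF refl])
        fix i assume "i \<in> S1 - L"
        then obtain k where k: "k \<in> C'" "i = m + k" "m + k \<notin> L" unfolding S1_def by blast
        thus "expect (Sop N G' i) \<rho> = 1" using eLf'[OF Cm[OF k(1)] k(3)] by simp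
      qed
      thus ?thesis unfolding K_def by simp
    qed
    have ej: "expect (Sop N G j) \<rho> = 1" using eC[OF j] mj by (simp add: ind_def)
    have ej': "expect (Sop N G' j) \<rho> = 1" using eC'[OF j] mj by (simp add: ind_def)
    have vG': "verts G' = {1..N} - L" unfolding G'_def induced_verts vG ..
    have degle: "deg G' v \<le> m" if "v \<in> verts G'" for v
    proof -
      have v: "v \<in> {1..2*m}" "v \<notin> L" using that vG' N_def by auto
      have "nbrs G' v \<subseteq> nbrs G v" using nG'_eq[OF v(2)] by auto
      moreover have "finite (nbrs G v)" by (rule good_fin[OF g])
      ultimately have "deg G' v \<le> deg G v" unfolding deg_def by (rule card_mono[rotated])
      also have "deg G v \<le> m"
        using vcases[OF v(1)] deg_c deg_l m1 unfolding G_def by auto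
      finally show ?thesis .
    qed
    have degj: "deg G' j = m"
    proof -
      have "deg G' j = card (insert (m + j) C')" unfolding deg_def nG'j ..
      also have "\<dots> = Suc (m - 1)" using finC mjC j unfolding C'_def by simp
      finally show ?thesis using m1 by simp
    qed
    have jv: "j \<in> verts G'" using vG' j CL[OF j] N_def by auto
    have nmG': "nmax G' = m" unfolding nmax_def
    proof (rule Max_eqI)
      show "finite (deg G' ` verts G')" using vG' by simp
      show "m \<in> deg G' ` verts G'" using jv degj by force
    qed (use degle in auto)
    have cVG': "card (verts G') = 2 * m - card L"
      unfolding vG' using card_Diff_subset[OF finL LN] N_def by simp
    have fn: "finite (nbrs G j)" "finite (nbrs G' j)" using finC nGj nG'j by auto
    have fv: "finite (verts G - cnbrs G j)" "finite (verts G' - cnbrs G' j)" using vG vG' by auto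
    have rc: "\<rho> \<in> carrier_mat (2^N) (2^N)" unfolding \<rho>_def by simp
    have rK: "real K = real m - 1 - real (card L)" using cK cL by (simp add: of_nat_diff)
    define val where "val = (2 * sqrt 2 - 1) * real m + real N - 1 - (sqrt 2 + 1) * real (card L)"
    have valeq: "sqrt 2 * real m * 1 + sqrt 2 * (1 + real K) + real K = val"
      unfolding val_def rK N_def by (simp add: algebra_simps)
    have EG: "expect (Iop N G j) \<rho> = complex_of_real val"
      unfolding expect_Iop[OF fn(1) fv(1) rc] nmG ej sn sv valeq[symmetric] by simp
    have EG': "expect (Iop N G' j) \<rho> = complex_of_real val"
      unfolding expect_Iop[OF fn(2) fv(2) rc] nmG' ej' sn' sv' valeq[symmetric] by simp
    define s where "s = sqrt (2::real)"
    have s0: "0 < s" unfolding s_def by simp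
    have ss: "s * s = 2" unfolding s_def by simp
    define c where "c = real (card L)"
    define r where "r = real m"
    have val_s: "val = (2 * s - 1) * r + 2 * r - 1 - (s + 1) * c"
      unfolding val_def s_def c_def r_def N_def by simp
    have bG'eq: "betaC G' = r + (2 * r - c) - 1"
      unfolding betaC_def nmG' cVG' r_def c_def using cL by (simp add: of_nat_diff)
    have bGeq: "betaC G = 3 * r - 1" unfolding bG r_def ..
    have I1: "(betaC G' < val) \<longleftrightarrow> c < (s - 1) / s * real N"
    proof -
      have "(s - 1) / s * real N = ((s - 1) * (2 * r)) / s" unfolding N_def r_def by simp
      hence "c < (s - 1) / s * real N \<longleftrightarrow> c < ((s - 1) * (2 * r)) / s" by (simp only:)
      also have "\<dots> \<longleftrightarrow> c * s < (s - 1) * (2 * r)" by (rule pos_less_divide_eq[OF s0])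
      finally have "c < (s - 1) / s * real N \<longleftrightarrow> c * s < (s - 1) * (2 * r)" .
      moreover have "(s - 1) * (2 * r) - c * s = 2 * s * r - 2 * r - s * c" by (simp add: algebra_simps)
      moreover have "val - betaC G' = 2 * s * r - 2 * r - s * c"
        unfolding val_s bG'eq by (simp add: algebra_simps)
      ultimately show ?thesis by linarith
    qed
    have I2: "(betaC G < val) \<longleftrightarrow> c < (s - 1) / (s + 1) * real N"
    proof -
      have s1: "0 < s + 1" using s0 by simp
      have "(s - 1) / (s + 1) * real N = ((s - 1) * (2 * r)) / (s + 1)" unfolding N_def r_def by simp
      hence "c < (s - 1) / (s + 1) * real N \<longleftrightarrow> c < ((s - 1) * (2 * r)) / (s + 1)" by (simp only:)
      also have "\<dots> \<longleftrightarrow> c * (s + 1) < (s - 1) * (2 * r)" by (rule pos_less_divide_eq[OF s1])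
      finally have "c < (s - 1) / (s + 1) * real N \<longleftrightarrow> c * (s + 1) < (s - 1) * (2 * r)" .
      moreover have "(s - 1) * (2 * r) - c * (s + 1) = 2 * s * r - 2 * r - s * c - c" by (simp add: algebra_simps)
      moreover have "val - betaC G = 2 * s * r - 2 * r - s * c - c"
        unfolding val_s bGeq by (simp add: algebra_simps)
      ultimately show ?thesis by linarith
    qed
    show "let G' = induced_del G L;
           \<rho> = lost_state N L (graph_state_dm N G);
           val = (2 * sqrt 2 - 1) * real m + real N - 1 - (sqrt 2 + 1) * real (card L)
       in expect (Iop N G j) \<rho> = complex_of_real val
        \<and> expect (Iop N G' j) \<rho> = complex_of_real val
        \<and> (Re (expect (Iop N G' j) \<rho>) > betaC G'
             \<longleftrightarrow> real (card L) < (sqrt 2 - 1) / sqrt 2 * real N)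
        \<and> (Re (expect (Iop N G j) \<rho>) > betaC G
             \<longleftrightarrow> real (card L) < (sqrt 2 - 1) / (sqrt 2 + 1) * real N)"
      unfolding Let_def G'_def[symmetric] \<rho>_def[symmetric] val_def[symmetric]
      using EG EG' I1 I2 unfolding s_def c_def by simp
  qed
  show ?thesis using nmG rG b2 main by blast
qed


end
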